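(* If $p>1-1/e^2$, then for every $n$, $0\le x_0(n)\le 1-\frac{2}{\log b}$.
   Context: Let $p\in(0,1)$ be constant, $q=1-p$, $b=1/q$, $\log$ the natural logarithm, $\gamma=\gamma(n)=2\log_b n-2\log_b\log_b n-2\log_b 2$, $\Delta=\gamma-\lfloor\gamma\rfloor\in[0,1)$. Define $\varphi_n(x)=(1-\Delta+x)\log_b(1-\Delta+x)+(1-\Delta)(\Delta-x)/2$, and let $x_0=x_0(n)$ be the smallest nonnegative $x$ with $\varphi_n(x)\le0$ (well defined since $\varphi_n(\Delta)=0$, and $x_0\in[0,\Delta]$). *)

theory Defs
  imports Complex_Main
begin

definition base :: "real \<Rightarrow> real" where
  "base p = 1 / (1 - p)"

definition gam :: "real \<Rightarrow> nat \<Rightarrow> real" where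
  "gam p n = 2 * log (base p) (real n) - 2 * log (base p) (log (base p) (real n))
             - 2 * log (base p) 2"

definition Delta :: "real \<Rightarrow> nat \<Rightarrow> real" where
  "Delta p n = gam p n - of_int \<lfloor>gam p n\<rfloor>"

definition phi :: "real \<Rightarrow> nat \<Rightarrow> real \<Rightarrow> real" where
  "phi p n x = (1 - Delta p n + x) * log (base p) (1 - Delta p n + x)
               + (1 - Delta p n) * (Delta p n - x) / 2"

definition x0 :: "real \<Rightarrow> nat \<Rightarrow> real" where
  "x0 p n = (LEAST x. 0 \<le> x \<and> phi p n x \<le> 0)"

end

theory Submission
  imports Defs "HOL-Analysis.Analysis"
begin

theorem lemma4:
  fixes p :: real and n :: nat
  assumes "0 < p" and "p < 1" and "p > 1 - 1 / exp 2"
  shows "0 \<le> x0 p n \<and> x0 p n \<le> 1 - 2 / ln (base p)"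
proof -
  define D where "D = Delta p n"
  define b where "b = base p"
  define L where "L = ln b"
  define c where "c = 1 - 2 / L"
  have D0: "0 \<le> D" and D1: "D < 1" unfolding D_def Delta_def
    by (simp_all add: floor_le_iff) (linarith)
  have q: "1 - p < 1 / exp 2" using assms(3) by simp
  have bgt: "b > exp 2" unfolding b_def base_def using q assms(2)
    by (simp add: field_simps)
  have b1: "b > 1" using bgt by (smt (verit) one_less_exp_iff zero_less_numeral)
  have L2: "L > 2" unfolding L_def using bgt
    by (metis exp_gt_zero less_trans ln_exp ln_less_cancel_iff)
  have phi_eq: "phi p n x = (1 - D + x) * (ln (1 - D + x) / L) + (1 - D) * (D - x) / 2" for x
    unfolding phi_def D_def[symmetric] b_def[symmetric] L_def log_def by simp
  have ex: "\<exists>y. 0 \<le> y \<and> y \<le> c \<and> phi p n y \<le> 0"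
  proof (cases "D \<le> c")
    case True
    then show ?thesis using D0 by (intro exI[of _ D]) (simp add: phi_eq)
  next
    case False
    define t where "t = 1 - D + c"
    define s where "s = 1 - D"
    have c0: "0 \<le> c" "c < 1" unfolding c_def using L2 by (auto simp: field_simps)
    have t0: "0 < t" "t < 1" unfolding t_def using False D1 c0 by auto
    have lnt: "ln t \<le> t - 1" using t0 ln_le_minus_one by blast
    have "t * ln t \<le> t * (t - 1)" using lnt t0 by (simp add: mult_left_mono)
    have sL: "s * L < 2" using False unfolding s_def c_def using L2 by (simp add: field_simps)
    have tge: "t \<ge> s * L / 2"
    proof -
      define u where "u = s * L / 2"
      have "t = 1 - 2 * (1 - u) / L" unfolding t_def u_def s_def c_def using L2
        by (simp add: field_simps)
      moreover have "2 * (1 - u) / L \<le> 1 - u"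
      proof -
        have u1: "1 - u > 0" using sL unfolding u_def by simp
        have "2 * (1 - u) \<le> L * (1 - u)" using L2 u1 by (intro mult_right_mono) auto
        thus ?thesis using L2 by (simp add: divide_le_eq mult.commute)
      qed
      ultimately show ?thesis unfolding u_def by linarith
    qed
    have "t * (ln t / L) + s * (D - c) / 2 \<le> 0"
    proof -
      have eq1: "D - c = 1 - t" unfolding t_def by simp
      have "t * (ln t / L) \<le> t * (t - 1) / L" using \<open>t * ln t \<le> t * (t - 1)\<close> L2
        by (simp add: divide_right_mono)
      moreover have "t * (t - 1) / L \<le> - (s * (1 - t) / 2)"
      proof -
        have "s * L / 2 * (1 - t) \<le> t * (1 - t)" using tge t0 by (simp add: mult_right_mono)
        hence "- (t * (1 - t)) \<le> - (s * L / 2 * (1 - t))" by linarith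
        hence "t * (t - 1) \<le> - (s * (1 - t) / 2) * L" by (simp add: algebra_simps)
        thus ?thesis using L2 by (simp add: field_simps)
      qed
      ultimately show ?thesis unfolding eq1 by simp
    qed
    moreover have "1 - D + c = t" "1 - D = s" unfolding t_def s_def by simp_all
    ultimately have "phi p n c \<le> 0" unfolding phi_eq by simp
    then show ?thesis using c0 by (intro exI[of _ c]) simp
  qed
  define g where "g x = (1 - D + max 0 x) * (ln (1 - D + max 0 x) / L) + (1 - D) * (D - max 0 x) / 2" for x
  have gc: "continuous_on UNIV g" unfolding g_def using D1 L2
    by (intro continuous_intros) (auto simp: max_def)
  define S where "S = {x. 0 \<le> x \<and> phi p n x \<le> 0}"
  have S_eq: "S = {x. 0 \<le> x} \<inter> {x. g x \<le> 0}"
    unfolding S_def g_def phi_eq by (auto simp: max_def)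
  have cl: "closed S" unfolding S_eq
    by (intro closed_Int closed_Collect_le gc continuous_on_const continuous_on_id)
  have ne: "S \<noteq> {}" using ex unfolding S_def by auto
  have bb: "bdd_below S" unfolding S_def by (rule bdd_belowI[of _ 0]) auto
  have mS: "Inf S \<in> S" using closed_contains_Inf[OF ne bb cl] .
  have x0eq: "x0 p n = Inf S" unfolding x0_def
    apply (rule Least_equality)
    using mS apply (simp add: S_def)
    using bb by (simp add: S_def cInf_lower)
  obtain y where y: "0 \<le> y" "y \<le> c" "phi p n y \<le> 0" using ex by blast
  have "Inf S \<le> y" using y bb by (intro cInf_lower) (auto simp: S_def)
  then show ?thesis using mS y x0eq unfolding S_def c_def L_def b_def by auto
qed

end
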